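(* Fix $(x,t)$ and let $F_k=\mu_k+\sqrt{\mu_k}f_k$ ($k=1,2$) be functions of $v\in\mathbb{R}^3$ with $(1+|v|^2)F_k\in L^1(\mathbb{R}^3)$, $n_k>0$. For $\theta\in[0,1]$ define $n_{k\theta}=\theta n_k+(1-\theta)n_{k0}$, $U_{k\theta}$ by $n_{k\theta}U_{k\theta}=\theta n_kU_k$, and $T_{k\theta}$ by $G_{k\theta}=\theta G_k$, where $G_k=\frac{3n_kT_k+m_kn_k|U_k|^2-3n_k}{\sqrt6}$ and $G_{k\theta}=\frac{3n_{k\theta}T_{k\theta}+m_kn_{k\theta}|U_{k\theta}|^2-3n_{k\theta}}{\sqrt6}$. Let $U_{12\theta},U_{21\theta},T_{12\theta},T_{21\theta}$ be defined from $(U_{k\theta},T_{k\theta})$ by the same formulas that define $U_{12},U_{21},T_{12},T_{21}$ from $(U_k,T_k)$, and let $\mathcal{M}_{12}(\theta)=\frac{n_{1\theta}}{(2\pi T_{12\theta}/m_1)^{3/2}}\exp(-\frac{|v-U_{12\theta}|^2}{2T_{12\theta}/m_1})$, $\mathcal{M}_{21}(\theta)=\frac{n_{2\theta}}{(2\pi T_{21\theta}/m_2)^{3/2}}\exp(-\frac{|v-U_{21\theta}|^2}{2T_{21\theta}/m_2})$, and assume $T_{12\theta},T_{21\theta}>0$ for $\theta\in[0,1]$. Set $\Gamma_{12}^{M}=\frac{1}{\sqrt{\mu_1}}\int_0^1\mathcal{M}_{12}''(\theta)(1-\theta)d\theta$ and $\Gamma_{21}^M=\frac{1}{\sqrt{\mu_2}}\int_0^1\mathcal{M}_{21}''(\theta)(1-\theta)d\theta$.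 Then \begin{align*} \mathcal{M}_{12}&=\mu_1+P_1f_1\sqrt{\mu_1}+(1-\delta)\sum_{i=2}^4\Big(\sqrt{\tfrac{n_{10}}{n_{20}}}\sqrt{\tfrac{m_1}{m_2}}\langle f_2,e_{2i}\rangle_{L^2_v}-\langle f_1,e_{1i}\rangle_{L^2_v}\Big)e_{1i}\sqrt{\mu_1}\\ &\quad+(1-\omega)\Big(\sqrt{\tfrac{n_{10}}{n_{20}}}\langle f_2,e_{25}\rangle_{L^2_v}-\langle f_1,e_{15}\rangle_{L^2_v}\Big)e_{15}\sqrt{\mu_1}+\sqrt{\mu_1}\,\Gamma_{12}^M, \end{align*} \begin{align*} \mathcal{M}_{21}&=\mu_2+P_2f_2\sqrt{\mu_2}+\tfrac{m_1}{m_2}(1-\delta)\sum_{i=2}^4\Big(\sqrt{\tfrac{n_{20}}{n_{10}}}\sqrt{\tfrac{m_2}{m_1}}\langle f_1,e_{1i}\rangle_{L^2_v}-\langle f_2,e_{2i}\rangle_{L^2_v}\Big)e_{2i}\sqrt{\mu_2}\\ &\quad+(1-\omega)\Big(\sqrt{\tfrac{n_{20}}{n_{10}}}\langle f_1,e_{15}\rangle_{L^2_v}-\langle f_2,e_{25}\rangle_{L^2_v}\Big)e_{25}\sqrt{\mu_2}+\sqrt{\mu_2}\,\Gamma_{21}^M. \end{align*}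
   Context: $m_1\ge m_2>0$, $n_{10},n_{20}>0$; $0\le\delta<1$, $0\le\omega<1$, $\gamma\ge0$ are parameters. For $F_k(v)$: $n_k=\int F_kdv$, $U_k=\frac1{n_k}\int F_kv\,dv$, $T_k=\frac{1}{3n_k}\int F_km_k|v-U_k|^2dv$; $U_{12}=\delta U_1+(1-\delta)U_2$, $U_{21}=\frac{m_1}{m_2}(1-\delta)U_1+(1-\frac{m_1}{m_2}(1-\delta))U_2$, $T_{12}=\omega T_1+(1-\omega)T_2+\gamma|U_2-U_1|^2$, $T_{21}=(1-\omega)T_1+\omega T_2+\big(\frac13m_1(1-\delta)(\frac{m_1}{m_2}(\delta-1)+1+\delta)-\gamma\big)|U_2-U_1|^2$; $\mathcal{M}_{12},\mathcal{M}_{21}$ are $\mathcal{M}_{12}(1),\mathcal{M}_{21}(1)$. $\mu_k(v)=n_{k0}(\frac{m_k}{2\pi})^{3/2}e^{-m_k|v|^2/2}$. Orthonormal functions in $L^2(\mathbb{R}^3_v)$: $e_{k1}=\frac{\sqrt{\mu_k}}{\sqrt{n_{k0}}}$, $e_{ki}=\sqrt{\frac{m_k}{n_{k0}}}v_{i-1}\sqrt{\mu_k}$ ($i=2,3,4$), $e_{k5}=\frac{m_k|v|^2-3}{\sqrt{6n_{k0}}}\sqrt{\mu_k}$; $P_kf=\sum_{i=1}^5\langle f,e_{ki}\rangle_{L^2_v}e_{ki}$, where $\langle f,g\rangle_{L^2_v}=\int_{\mathbb{R}^3}fg\,dv$. *)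

theory Defs
  imports "HOL-Analysis.Analysis"
begin

definition mu :: "real \<Rightarrow> real \<Rightarrow> real^3 \<Rightarrow> real" where
  "mu m n0 v = n0 * (m / (2*pi)) powr (3/2) * exp (- m * (norm v)^2 / 2)"

definition vcomp :: "nat \<Rightarrow> real^3 \<Rightarrow> real" where
  "vcomp j v = (if j = 1 then v$1 else if j = 2 then v$2 else v$3)"

definition ebasis :: "real \<Rightarrow> real \<Rightarrow> nat \<Rightarrow> real^3 \<Rightarrow> real" where
  "ebasis m n0 i v =
     (if i = 1 then sqrt (mu m n0 v) / sqrt n0
      else if i \<in> {2,3,4} then sqrt (m / n0) * vcomp (i - 1) v * sqrt (mu m n0 v)
      else if i = 5 then (m * (norm v)^2 - 3) / sqrt (6 * n0) * sqrt (mu m n0 v)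
      else 0)"

definition L2ip :: "(real^3 \<Rightarrow> real) \<Rightarrow> (real^3 \<Rightarrow> real) \<Rightarrow> real" where
  "L2ip f g = (\<integral>v. f v * g v \<partial>lborel)"

definition Pproj :: "real \<Rightarrow> real \<Rightarrow> (real^3 \<Rightarrow> real) \<Rightarrow> real^3 \<Rightarrow> real" where
  "Pproj m n0 f v = (\<Sum>i=1..5. L2ip f (ebasis m n0 i) * ebasis m n0 i v)"

definition dens :: "(real^3 \<Rightarrow> real) \<Rightarrow> real" where
  "dens F = (\<integral>v. F v \<partial>lborel)"

definition vel :: "(real^3 \<Rightarrow> real) \<Rightarrow> real^3" where
  "vel F = (1 / dens F) *\<^sub>R (\<integral>v. F v *\<^sub>R v \<partial>lborel)"

definition temp :: "real \<Rightarrow> (real^3 \<Rightarrow> real) \<Rightarrow> real" where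
  "temp m F = 1 / (3 * dens F) * (\<integral>v. F v * m * (norm (v - vel F))^2 \<partial>lborel)"

definition maxw :: "real \<Rightarrow> real \<Rightarrow> real^3 \<Rightarrow> real \<Rightarrow> real^3 \<Rightarrow> real" where
  "maxw m n U T v = n / (2 * pi * T / m) powr (3/2) * exp (- ((norm (v - U))\<^sup>2) / (2 * T / m))"

definition U12 :: "real \<Rightarrow> real^3 \<Rightarrow> real^3 \<Rightarrow> real^3" where
  "U12 \<delta> U1 U2 = \<delta> *\<^sub>R U1 + (1 - \<delta>) *\<^sub>R U2"

definition U21 :: "real \<Rightarrow> real \<Rightarrow> real \<Rightarrow> real^3 \<Rightarrow> real^3 \<Rightarrow> real^3" where
  "U21 m1 m2 \<delta> U1 U2 = (m1 / m2 * (1 - \<delta>)) *\<^sub>R U1 + (1 - m1 / m2 * (1 - \<delta>)) *\<^sub>R U2"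

definition T12 :: "real \<Rightarrow> real \<Rightarrow> real \<Rightarrow> real \<Rightarrow> real^3 \<Rightarrow> real^3 \<Rightarrow> real" where
  "T12 \<omega> \<gamma> T1 T2 U1 U2 = \<omega> * T1 + (1 - \<omega>) * T2 + \<gamma> * (norm (U2 - U1))^2"

definition T21 :: "real \<Rightarrow> real \<Rightarrow> real \<Rightarrow> real \<Rightarrow> real \<Rightarrow> real \<Rightarrow> real \<Rightarrow> real^3 \<Rightarrow> real^3 \<Rightarrow> real" where
  "T21 m1 m2 \<delta> \<omega> \<gamma> T1 T2 U1 U2 = (1 - \<omega>) * T1 + \<omega> * T2
     + (1/3 * m1 * (1 - \<delta>) * (m1 / m2 * (\<delta> - 1) + 1 + \<delta>) - \<gamma>) * (norm (U2 - U1))^2"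

text \<open>theta-interpolated quantities: n_{k theta}, U_{k theta} from n_{k theta} U_{k theta} = theta n_k U_k,
  and T_{k theta} from G_{k theta} = theta G_k (solved explicitly for T_{k theta}).\<close>
definition nth :: "real \<Rightarrow> real \<Rightarrow> real \<Rightarrow> real" where
  "nth \<theta> n n0 = \<theta> * n + (1 - \<theta>) * n0"

definition Uth :: "real \<Rightarrow> real \<Rightarrow> real \<Rightarrow> real^3 \<Rightarrow> real^3" where
  "Uth \<theta> n n0 U = (\<theta> * n / nth \<theta> n n0) *\<^sub>R U"

definition Gk :: "real \<Rightarrow> real \<Rightarrow> real^3 \<Rightarrow> real \<Rightarrow> real" where
  "Gk m n U T = (3 * n * T + m * n * (norm U)^2 - 3 * n) / sqrt 6"

definition Tth :: "real \<Rightarrow> real \<Rightarrow> real \<Rightarrow> real \<Rightarrow> real^3 \<Rightarrow> real \<Rightarrow> real" where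
  "Tth m \<theta> n n0 U T =
     (sqrt 6 * \<theta> * Gk m n U T + 3 * nth \<theta> n n0 - m * nth \<theta> n n0 * (norm (Uth \<theta> n n0 U))^2)
       / (3 * nth \<theta> n n0)"

definition T12th where
  "T12th m1 m2 \<omega> \<gamma> n1 n10 U1 T1 n2 n20 U2 T2 \<theta> =
     T12 \<omega> \<gamma> (Tth m1 \<theta> n1 n10 U1 T1) (Tth m2 \<theta> n2 n20 U2 T2) (Uth \<theta> n1 n10 U1) (Uth \<theta> n2 n20 U2)"

definition T21th where
  "T21th m1 m2 \<delta> \<omega> \<gamma> n1 n10 U1 T1 n2 n20 U2 T2 \<theta> =
     T21 m1 m2 \<delta> \<omega> \<gamma> (Tth m1 \<theta> n1 n10 U1 T1) (Tth m2 \<theta> n2 n20 U2 T2) (Uth \<theta> n1 n10 U1) (Uth \<theta> n2 n20 U2)"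

definition M12th where
  "M12th m1 m2 \<delta> \<omega> \<gamma> n1 n10 U1 T1 n2 n20 U2 T2 \<theta> v =
     maxw m1 (nth \<theta> n1 n10) (U12 \<delta> (Uth \<theta> n1 n10 U1) (Uth \<theta> n2 n20 U2))
       (T12th m1 m2 \<omega> \<gamma> n1 n10 U1 T1 n2 n20 U2 T2 \<theta>) v"

definition M21th where
  "M21th m1 m2 \<delta> \<omega> \<gamma> n1 n10 U1 T1 n2 n20 U2 T2 \<theta> v =
     maxw m2 (nth \<theta> n2 n20) (U21 m1 m2 \<delta> (Uth \<theta> n1 n10 U1) (Uth \<theta> n2 n20 U2))
       (T21th m1 m2 \<delta> \<omega> \<gamma> n1 n10 U1 T1 n2 n20 U2 T2 \<theta>) v"

end

theory Submission
  imports Defs "HOL-Probability.Probability"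
begin


lemma lborel_prod_integral:
  fixes f :: "'a::euclidean_space \<Rightarrow> real \<Rightarrow> real"
  assumes int: "\<And>b. b \<in> Basis \<Longrightarrow> integrable lborel (f b)"
  shows "integrable lborel (\<lambda>x::'a. \<Prod>b\<in>Basis. f b (x \<bullet> b))"
    and "(\<integral>x. (\<Prod>b\<in>Basis. f b (x \<bullet> b)) \<partial>lborel) = (\<Prod>b\<in>Basis. \<integral>x. f b x \<partial>lborel)"
proof -
  interpret product_sigma_finite "\<lambda>_::'a. lborel::real measure" by standard
  have meas[measurable]: "\<And>b. b \<in> Basis \<Longrightarrow> f b \<in> borel_measurable borel"
    using int by auto
  have m2: "(\<lambda>x::'a. \<Prod>b\<in>Basis. f b (x \<bullet> b)) \<in> borel_measurable borel"
    by measurable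
  have eq: "\<And>g::'a\<Rightarrow>real. (\<Prod>b\<in>Basis. f b ((\<Sum>c\<in>Basis. g c *\<^sub>R c) \<bullet> b)) = (\<Prod>b\<in>Basis. f b (g b))"
    by (intro prod.cong refl) (simp add: inner_sum_left inner_Basis if_distrib[of "\<lambda>x. _ * x"] sum.delta cong: if_cong)
  have mT: "(\<lambda>g::'a\<Rightarrow>real. \<Sum>c\<in>Basis. g c *\<^sub>R c) \<in> measurable (\<Pi>\<^sub>M b\<in>Basis. lborel) borel"
    by measurable
  show "integrable lborel (\<lambda>x::'a. \<Prod>b\<in>Basis. f b (x \<bullet> b))"
    apply (subst lborel_eq)
    apply (subst integrable_distr_eq[OF mT m2])
    apply (simp only: eq)
    by (rule product_integrable_prod) (auto intro: int)
  show "(\<integral>x. (\<Prod>b\<in>Basis. f b (x \<bullet> b)) \<partial>lborel) = (\<Prod>b\<in>Basis. \<integral>x. f b x \<partial>lborel)"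
    apply (subst lborel_eq)
    apply (subst integral_distr[OF mT m2])
    apply (simp only: eq)
    by (rule product_integral_prod) (auto intro: int)
qed




lemma norm_sq_basis: "(norm (v::'a::euclidean_space))^2 = (\<Sum>b\<in>Basis. (v \<bullet> b)^2)"
  unfolding power2_norm_eq_inner by (subst euclidean_inner) (simp add: power2_eq_square)

lemma mu_prod:
  assumes m: "m > 0"
  shows "mu m n0 v = n0 * (\<Prod>b\<in>(Basis::(real^3) set). normal_density 0 (1/sqrt m) (v \<bullet> b))"
proof -
  have nd: "normal_density 0 (1/sqrt m) x = sqrt (m/(2*pi)) * exp (- m * x^2 / 2)" for x
    using m by (simp add: normal_density_def power_divide real_sqrt_divide field_simps)
  have "(\<Prod>b\<in>(Basis::(real^3) set). normal_density 0 (1/sqrt m) (v \<bullet> b))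
      = (\<Prod>b\<in>(Basis::(real^3) set). sqrt (m/(2*pi))) * (\<Prod>b\<in>(Basis::(real^3) set). exp (- m * (v\<bullet>b)^2 / 2))"
    by (simp add: nd prod.distrib)
  also have "(\<Prod>b\<in>(Basis::(real^3) set). exp (- m * (v\<bullet>b)^2 / 2)) = exp (\<Sum>b\<in>(Basis::(real^3) set). - m * (v\<bullet>b)^2 / 2)"
    by (simp add: exp_sum)
  also have "(\<Sum>b\<in>(Basis::(real^3) set). - m * (v\<bullet>b)^2 / 2) = - m * (norm v)^2 / 2"
    by (simp add: norm_sq_basis[of v] sum_distrib_left sum_divide_distrib)
  also have "(\<Prod>b\<in>(Basis::(real^3) set). sqrt (m/(2*pi))) = sqrt (m/(2*pi)) ^ 3"
    by simp
  also have "sqrt (m/(2*pi)) ^ 3 = (m/(2*pi)) powr (3/2)"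
  proof -
    have x: "m/(2*pi) > 0" using m by simp
    have "sqrt (m/(2*pi)) ^ 3 = ((m/(2*pi)) powr (1/2)) powr (real 3)"
      using x by (simp add: powr_half_sqrt powr_realpow)
    also have "\<dots> = (m/(2*pi)) powr (3/2)" by (simp add: powr_powr)
    finally show ?thesis .
  qed
  finally show ?thesis by (simp add: mu_def)
qed

lemma prod_if_delta:
  fixes g :: "'b \<Rightarrow> real"
  assumes "finite A" "c \<in> A"
  shows "(\<Prod>b\<in>A. if b = c then g b * h else g b) = (\<Prod>b\<in>A. g b) * h"
proof -
  have "(\<Prod>b\<in>A. if b = c then g b * h else g b) = (\<Prod>b\<in>A. g b * (if b = c then h else 1))"
    by (intro prod.cong) auto
  also have "\<dots> = (\<Prod>b\<in>A. g b) * h" using assms by (simp add: prod.distrib prod.delta)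
  finally show ?thesis .
qed

context fixes m n0 :: real assumes m: "m > 0"
begin

lemma mu_int0: "integrable lborel (mu m n0)" "(\<integral>v. mu m n0 v \<partial>lborel) = n0"
proof -
  have s: "1/sqrt m > 0" using m by simp
  have i: "integrable lborel (\<lambda>v::real^3. \<Prod>b\<in>Basis. normal_density 0 (1/sqrt m) (v \<bullet> b))"
    and e: "(\<integral>v. (\<Prod>b\<in>Basis. normal_density 0 (1/sqrt m) ((v::real^3) \<bullet> b)) \<partial>lborel) = 1"
    using lborel_prod_integral[of "\<lambda>_. normal_density 0 (1/sqrt m)"] s by auto
  have eqm: "mu m n0 = (\<lambda>v. n0 * (\<Prod>b\<in>Basis. normal_density 0 (1/sqrt m) ((v::real^3) \<bullet> b)))"
    by (rule ext, rule mu_prod[OF m])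
  show "integrable lborel (mu m n0)" unfolding eqm by (intro integrable_mult_right i)
  show "(\<integral>v. mu m n0 v \<partial>lborel) = n0" using e by (simp add: mu_prod[OF m])
qed

lemma mu_int1:
  assumes c: "c \<in> (Basis::(real^3) set)"
  shows "integrable lborel (\<lambda>v. mu m n0 v * (v \<bullet> c))" "(\<integral>v. mu m n0 v * (v \<bullet> c) \<partial>lborel) = 0"
proof -
  have s: "1/sqrt m > 0" using m by simp
  define g where "g b = (if b = c then (\<lambda>x. normal_density 0 (1/sqrt m) x * x) else normal_density 0 (1/sqrt m))" for b
  have gi: "integrable lborel (g b)" for b
    using integrable_normal_moment_nz_1[OF s] integrable_normal_density[OF s] by (auto simp: g_def)
  have eqf: "(\<lambda>v. mu m n0 v * (v \<bullet> c)) = (\<lambda>v::real^3. n0 * (\<Prod>b\<in>Basis. g b (v \<bullet> b)))"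
  proof (rule ext)
    fix v :: "real^3"
    have "(\<Prod>b\<in>Basis. g b (v \<bullet> b)) = (\<Prod>b\<in>Basis. if b = c then normal_density 0 (1/sqrt m) (v \<bullet> b) * (v \<bullet> c) else normal_density 0 (1/sqrt m) (v \<bullet> b))"
      by (intro prod.cong) (auto simp: g_def)
    also have "\<dots> = (\<Prod>b\<in>Basis. normal_density 0 (1/sqrt m) (v \<bullet> b)) * (v \<bullet> c)"
      by (rule prod_if_delta[OF _ c]) simp
    finally show "mu m n0 v * (v \<bullet> c) = n0 * (\<Prod>b\<in>Basis. g b (v \<bullet> b))"
      by (simp add: mu_prod[OF m])
  qed
  have "(\<Prod>b\<in>(Basis::(real^3) set). integral\<^sup>L lborel (g b)) = 0"
    using c integral_normal_moment_nz_1[OF s, of 0] by (intro prod_zero) (auto simp: g_def intro!: bexI[of _ c])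
  then show "integrable lborel (\<lambda>v. mu m n0 v * (v \<bullet> c))" "(\<integral>v. mu m n0 v * (v \<bullet> c) \<partial>lborel) = 0"
    unfolding eqf using lborel_prod_integral[of g, OF gi] by auto
qed

lemma mu_int2:
  assumes c: "c \<in> (Basis::(real^3) set)"
  shows "integrable lborel (\<lambda>v. mu m n0 v * (v \<bullet> c)^2)" "(\<integral>v. mu m n0 v * (v \<bullet> c)^2 \<partial>lborel) = n0 / m"
proof -
  have s: "1/sqrt m > 0" using m by simp
  define g where "g b = (if b = c then (\<lambda>x. normal_density 0 (1/sqrt m) x * x^2) else normal_density 0 (1/sqrt m))" for b
  have i2: "integrable lborel (\<lambda>x. normal_density 0 (1/sqrt m) x * x^2)"
    using integrable_normal_moment[OF s, of 0 2] by simp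
  have e2: "(\<integral>x. normal_density 0 (1/sqrt m) x * x^2 \<partial>lborel) = 1/m"
    using integral_normal_moment_even[OF s, of 0 1] m by (simp add: power_divide)
  have gi: "integrable lborel (g b)" for b
    using i2 integrable_normal_density[OF s] by (auto simp: g_def)
  have eqf: "(\<lambda>v. mu m n0 v * (v \<bullet> c)^2) = (\<lambda>v::real^3. n0 * (\<Prod>b\<in>Basis. g b (v \<bullet> b)))"
  proof (rule ext)
    fix v :: "real^3"
    have "(\<Prod>b\<in>Basis. g b (v \<bullet> b)) = (\<Prod>b\<in>Basis. if b = c then normal_density 0 (1/sqrt m) (v \<bullet> b) * (v \<bullet> c)^2 else normal_density 0 (1/sqrt m) (v \<bullet> b))"
      by (intro prod.cong) (auto simp: g_def)
    also have "\<dots> = (\<Prod>b\<in>Basis. normal_density 0 (1/sqrt m) (v \<bullet> b)) * (v \<bullet> c)^2"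
      by (rule prod_if_delta[OF _ c]) simp
    finally show "mu m n0 v * (v \<bullet> c)^2 = n0 * (\<Prod>b\<in>Basis. g b (v \<bullet> b))"
      by (simp add: mu_prod[OF m])
  qed
  have "(\<Prod>b\<in>(Basis::(real^3) set). integral\<^sup>L lborel (g b)) = 1/m"
  proof -
    have "(\<Prod>b\<in>(Basis::(real^3) set). integral\<^sup>L lborel (g b)) = (\<Prod>b\<in>(Basis::(real^3) set). if b = c then 1 * (1/m) else 1)"
      by (intro prod.cong) (auto simp: g_def e2 s integral_normal_density[OF s])
    also have "\<dots> = 1/m" using prod_if_delta[OF _ c, of "\<lambda>_. 1" "1/m"] by simp
    finally show ?thesis .
  qed
  then show "integrable lborel (\<lambda>v. mu m n0 v * (v \<bullet> c)^2)" "(\<integral>v. mu m n0 v * (v \<bullet> c)^2 \<partial>lborel) = n0/m"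
    unfolding eqf using lborel_prod_integral[of g, OF gi] by auto
qed

lemma mu_int2n: "integrable lborel (\<lambda>v. mu m n0 v * (norm v)^2)" "(\<integral>v. mu m n0 v * (norm v)^2 \<partial>lborel) = 3 * n0 / m"
proof -
  have eq: "(\<lambda>v. mu m n0 v * (norm v)^2) = (\<lambda>v::real^3. \<Sum>c\<in>Basis. mu m n0 v * (v \<bullet> c)^2)"
    by (auto simp: norm_sq_basis sum_distrib_left)
  show "integrable lborel (\<lambda>v. mu m n0 v * (norm v)^2)"
    unfolding eq by (rule Bochner_Integration.integrable_sum[OF mu_int2(1)])
  have "(\<integral>v. mu m n0 v * (norm v)^2 \<partial>lborel) = (\<Sum>c\<in>(Basis::(real^3) set). \<integral>v. mu m n0 v * (v \<bullet> c)^2 \<partial>lborel)"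
    unfolding eq by (rule Bochner_Integration.integral_sum[OF mu_int2(1)])
  also have "\<dots> = (\<Sum>c\<in>(Basis::(real^3) set). n0/m)" by (intro sum.cong) (auto simp: mu_int2)
  finally show "(\<integral>v. mu m n0 v * (norm v)^2 \<partial>lborel) = 3 * n0 / m" by simp
qed

end



definition vb :: "nat \<Rightarrow> real^3" where
  "vb j = axis (if j = 1 then 1 else if j = 2 then 2 else 3) 1"

lemma vb_Basis: "vb j \<in> Basis" by (simp add: vb_def)

lemma vcomp_vb: "vcomp j v = v \<bullet> vb j"
  by (simp add: vcomp_def vb_def cart_eq_inner_axis)

lemma norm_le_1sq: "norm (v::'a::real_normed_vector) \<le> 1 + (norm v)^2"
proof (cases "norm v \<le> 1")
  case True then show ?thesis by (simp add: add_increasing2)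
next
  case False then have "norm v \<le> norm v * norm v" by (simp add: mult_le_cancel_left1)
  then show ?thesis by (simp add: power2_eq_square)
qed

context
  fixes m n0 :: real and f F :: "real^3 \<Rightarrow> real"
  assumes m: "m > 0" and n0: "n0 > 0"
    and F: "F = (\<lambda>v. mu m n0 v + sqrt (mu m n0 v) * f v)"
    and int: "integrable lborel (\<lambda>v. (1 + (norm v)^2) * F v)"
    and npos: "dens F \<noteq> 0"
begin

lemma Fv: "F v = mu m n0 v + sqrt (mu m n0 v) * f v"
  by (simp add: F)

lemma fsq: "f v * sqrt (mu m n0 v) = F v - mu m n0 v"
  by (simp add: F)

lemma Fmeas[measurable]: "F \<in> borel_measurable lborel"
proof -
  have "F = (\<lambda>v. ((1 + (norm v)^2) * F v) / (1 + (norm v)^2))"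
    by (rule ext) (smt (verit) zero_le_power2 nonzero_mult_div_cancel_left)
  also have "\<dots> \<in> borel_measurable lborel"
    using int by measurable
  finally show ?thesis .
qed

lemma le1: "\<bar>a\<bar> \<le> (1 + (norm (v::real^3))^2) * \<bar>a::real\<bar>"
proof -
  have "(1 + (norm v)^2) * \<bar>a\<bar> = \<bar>a\<bar> + (norm v)^2 * \<bar>a\<bar>" by (simp add: distrib_right)
  then show ?thesis by simp
qed

lemma iF: "integrable lborel F"
  by (rule Bochner_Integration.integrable_bound[OF int]) (auto simp: abs_mult intro!: le1)

lemma le2: "\<bar>a\<bar> * (norm (v::real^3))^2 \<le> (1 + (norm v)^2) * \<bar>a::real\<bar>"
proof -
  have "(1 + (norm v)^2) * \<bar>a\<bar> = \<bar>a\<bar> + (norm v)^2 * \<bar>a\<bar>" by (simp add: distrib_right)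
  then show ?thesis by (simp add: mult.commute)
qed

lemma iF2: "integrable lborel (\<lambda>v. F v * (norm v)^2)"
  by (rule Bochner_Integration.integrable_bound[OF int]) (auto simp: abs_mult intro!: le2)

lemma iFv: "integrable lborel (\<lambda>v. F v *\<^sub>R v)"
  by (rule Bochner_Integration.integrable_bound[OF int]) (auto simp: abs_mult mult.commute[of "\<bar>F _\<bar>"] intro!: mult_right_mono norm_le_1sq)

lemma iFc: "integrable lborel (\<lambda>v. F v * (v \<bullet> c))"
proof -
  have "integrable lborel (\<lambda>v. (F v *\<^sub>R v) \<bullet> c)" by (rule integrable_inner_left) (rule iFv)
  then show ?thesis by simp
qed

lemma Fc: "(\<integral>v. F v * (v \<bullet> c) \<partial>lborel) = dens F * (vel F \<bullet> c)"
proof -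
  have "(\<integral>v. F v * (v \<bullet> c) \<partial>lborel) = (\<integral>v. (F v *\<^sub>R v) \<bullet> c \<partial>lborel)" by simp
  also have "\<dots> = (\<integral>v. F v *\<^sub>R v \<partial>lborel) \<bullet> c" using iFv by (rule integral_inner_left)
  also have "\<dots> = dens F * (vel F \<bullet> c)" using npos by (simp add: vel_def)
  finally show ?thesis .
qed

lemma L2_1: "L2ip f (ebasis m n0 1) = (dens F - n0) / sqrt n0"
proof -
  have eq: "(\<lambda>v. f v * ebasis m n0 1 v) = (\<lambda>v. (F v - mu m n0 v) / sqrt n0)"
    by (rule ext) (simp add: ebasis_def fsq[symmetric])
  have hb: "has_bochner_integral lborel (\<lambda>v. (F v - mu m n0 v) / sqrt n0) ((dens F - n0) / sqrt n0)"
    using has_bochner_integral_integrable[OF iF] has_bochner_integral_integrable[OF mu_int0(1)[OF m, of n0]]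
    by (intro has_bochner_integral_divide_zero has_bochner_integral_diff) (auto simp: dens_def mu_int0[OF m])
  show ?thesis unfolding L2ip_def eq by (rule has_bochner_integral_integral_eq[OF hb])
qed

lemma L2_234: assumes i: "i \<in> {2,3,4}"
  shows "L2ip f (ebasis m n0 i) = sqrt (m/n0) * dens F * vcomp (i - 1) (vel F)"
proof -
  define c where "c = vb (i - 1)"
  have c: "c \<in> Basis" by (simp add: c_def vb_Basis)
  have eq: "(\<lambda>v. f v * ebasis m n0 i v) = (\<lambda>v. sqrt (m/n0) * (F v * (v \<bullet> c) - mu m n0 v * (v \<bullet> c)))"
    using i by (intro ext) (auto simp: ebasis_def Fv c_def vcomp_vb algebra_simps)
  have hb: "has_bochner_integral lborel (\<lambda>v. sqrt (m/n0) * (F v * (v \<bullet> c) - mu m n0 v * (v \<bullet> c))) (sqrt (m/n0) * (dens F * (vel F \<bullet> c) - 0))"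
    using has_bochner_integral_integrable[OF iFc[of c]] has_bochner_integral_integrable[OF mu_int1(1)[OF m c, of n0]]
    by (intro has_bochner_integral_mult_right has_bochner_integral_diff) (auto simp: Fc mu_int1[OF m c])
  show ?thesis unfolding L2ip_def eq has_bochner_integral_integral_eq[OF hb] by (simp add: c_def vcomp_vb)
qed

lemma temp_eq: "3 * dens F * temp m F = m * (\<integral>v. F v * (norm v)^2 \<partial>lborel) - m * dens F * (norm (vel F))^2"
proof -
  define U where "U = vel F"
  have eq: "(\<lambda>v. F v * m * (norm (v - U))^2) = (\<lambda>v. m * (F v * (norm v)^2) - 2 * m * ((F v *\<^sub>R v) \<bullet> U) + m * (norm U)^2 * F v)"
    by (rule ext) (simp add: power2_norm_eq_inner inner_diff algebra_simps inner_commute)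
  have iU: "integrable lborel (\<lambda>v. (F v *\<^sub>R v) \<bullet> U)" by (rule integrable_inner_left) (rule iFv)
  have V: "(\<integral>v. F v *\<^sub>R v \<partial>lborel) = dens F *\<^sub>R U" using npos by (simp add: U_def vel_def)
  have "(\<integral>v. (F v *\<^sub>R v) \<bullet> U \<partial>lborel) = (\<integral>v. F v *\<^sub>R v \<partial>lborel) \<bullet> U"
    by (rule integral_inner_left) (rule iFv)
  also have "\<dots> = dens F * (norm U)^2" by (simp add: V power2_norm_eq_inner)
  finally have FU: "(\<integral>v. (F v *\<^sub>R v) \<bullet> U \<partial>lborel) = dens F * (norm U)^2" .
  have "has_bochner_integral lborel (\<lambda>v. m * (F v * (norm v)^2) - 2 * m * ((F v *\<^sub>R v) \<bullet> U) + m * (norm U)^2 * F v)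
      (m * (\<integral>v. F v * (norm v)^2 \<partial>lborel) - 2 * m * (dens F * (norm U)^2) + m * (norm U)^2 * dens F)"
    using has_bochner_integral_integrable[OF iF2] has_bochner_integral_integrable[OF iU] has_bochner_integral_integrable[OF iF]
    by (intro has_bochner_integral_mult_right has_bochner_integral_diff has_bochner_integral_add) (auto simp: FU FU[simplified] dens_def)
  then have "(\<integral>v. F v * m * (norm (v - U))^2 \<partial>lborel) = m * (\<integral>v. F v * (norm v)^2 \<partial>lborel) - m * dens F * (norm U)^2"
    unfolding eq by (simp add: has_bochner_integral_integral_eq algebra_simps)
  then show ?thesis using npos by (simp add: temp_def U_def)
qed

lemma L2_5: "L2ip f (ebasis m n0 5) = (3 * dens F * temp m F + m * dens F * (norm (vel F))^2 - 3 * dens F) / sqrt (6 * n0)"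
proof -
  define I2 where "I2 = (\<integral>v. F v * (norm v)^2 \<partial>lborel)"
  have eq: "(\<lambda>v. f v * ebasis m n0 5 v) = (\<lambda>v. (m * (F v * (norm v)^2) - 3 * F v - m * (mu m n0 v * (norm v)^2) + 3 * mu m n0 v) / sqrt (6 * n0))"
    by (rule ext) (simp add: ebasis_def Fv algebra_simps add_divide_distrib diff_divide_distrib)
  have hb: "has_bochner_integral lborel (\<lambda>v. (m * (F v * (norm v)^2) - 3 * F v - m * (mu m n0 v * (norm v)^2) + 3 * mu m n0 v) / sqrt (6 * n0))
     ((m * I2 - 3 * dens F - m * (3 * n0 / m) + 3 * n0) / sqrt (6 * n0))"
    using has_bochner_integral_integrable[OF iF2] has_bochner_integral_integrable[OF iF]
      has_bochner_integral_integrable[OF mu_int2n(1)[OF m, of n0]] has_bochner_integral_integrable[OF mu_int0(1)[OF m, of n0]]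
    by (intro has_bochner_integral_divide_zero has_bochner_integral_mult_right has_bochner_integral_diff has_bochner_integral_add)
       (auto simp: I2_def dens_def mu_int2n[OF m] mu_int0[OF m])
  have "L2ip f (ebasis m n0 5) = (m * I2 - 3 * dens F - m * (3 * n0 / m) + 3 * n0) / sqrt (6 * n0)"
    unfolding L2ip_def eq by (rule has_bochner_integral_integral_eq[OF hb])
  also have "\<dots> = (3 * dens F * temp m F + m * dens F * (norm (vel F))^2 - 3 * dens F) / sqrt (6 * n0)"
    using m by (simp add: temp_eq I2_def)
  finally show ?thesis .
qed

end



definition C2 :: "(real \<Rightarrow> real) \<Rightarrow> real set \<Rightarrow> bool" where
  "C2 f S \<longleftrightarrow> (\<exists>g1 g2. \<forall>x\<in>S. (f has_real_derivative g1 x) (at x) \<and> (g1 has_real_derivative g2 x) (at x))"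

lemma C2_const[simp]: "C2 (\<lambda>x. c) S"
  unfolding C2_def by (rule exI[of _ "\<lambda>_. 0"], rule exI[of _ "\<lambda>_. 0"]) (auto intro!: derivative_eq_intros)

lemma C2_id[simp]: "C2 (\<lambda>x. x) S"
  unfolding C2_def by (rule exI[of _ "\<lambda>_. 1"], rule exI[of _ "\<lambda>_. 0"]) (auto intro!: derivative_eq_intros)

lemma C2_add: "C2 f S \<Longrightarrow> C2 g S \<Longrightarrow> C2 (\<lambda>x. f x + g x) S"
  unfolding C2_def
  apply (elim exE)
  subgoal for f1 g1 f2 g2
    by (rule exI[of _ "\<lambda>x. f1 x + g1 x"], rule exI[of _ "\<lambda>x. f2 x + g2 x"]) (auto intro!: derivative_eq_intros)
  done

lemma C2_mult: "C2 f S \<Longrightarrow> C2 g S \<Longrightarrow> C2 (\<lambda>x. f x * g x) S"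
  unfolding C2_def
  apply (elim exE)
  subgoal for f1 g1 f2 g2
    apply (rule exI[of _ "\<lambda>x. f1 x * g x + f x * g1 x"], rule exI[of _ "\<lambda>x. f2 x * g x + f1 x * g1 x + (f1 x * g1 x + f x * g2 x)"])
    apply (intro ballI conjI)
     apply (auto intro!: derivative_eq_intros)
    done
  done

lemma C2_compose: "C2 h T \<Longrightarrow> C2 f S \<Longrightarrow> (\<And>x. x \<in> S \<Longrightarrow> f x \<in> T) \<Longrightarrow> C2 (\<lambda>x. h (f x)) S"
  unfolding C2_def
  apply (elim exE)
  subgoal for h1 f1 h2 f2
    apply (rule exI[of _ "\<lambda>x. h1 (f x) * f1 x"], rule exI[of _ "\<lambda>x. h2 (f x) * f1 x * f1 x + h1 (f x) * f2 x"])
    apply (intro ballI conjI)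
     apply (rule DERIV_chain2[where f=h]; force)
    apply (rule derivative_eq_intros)
       apply (rule DERIV_chain2[where f=h1]; force)
      apply force
     apply force
    done
  done

lemma C2_exp: "C2 exp S"
  unfolding C2_def by (rule exI[of _ exp], rule exI[of _ exp]) (auto intro!: derivative_eq_intros)

lemma C2_inverse: "C2 inverse {x. x \<noteq> 0}"
  unfolding C2_def
  apply (rule exI[of _ "\<lambda>x. - inverse (x^2)"], rule exI[of _ "\<lambda>x. 2 * inverse (x^3)"])
  apply (auto intro!: derivative_eq_intros simp: field_simps power2_eq_square power3_eq_cube)
  done

lemma C2_powr: "C2 (\<lambda>x. x powr a) {0<..}"
  unfolding C2_def
  apply (rule exI[of _ "\<lambda>x. a * x powr (a - 1)"], rule exI[of _ "\<lambda>x. a * ((a - 1) * x powr (a - 1 - 1))"])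
  apply (auto intro!: derivative_eq_intros)
  done

lemma C2_subset: "C2 f S \<Longrightarrow> T \<subseteq> S \<Longrightarrow> C2 f T"
  unfolding C2_def by blast

lemma C2_minus: "C2 f S \<Longrightarrow> C2 (\<lambda>x. - f x) S"
  using C2_mult[of "\<lambda>_. -1" S f] by simp

lemma C2_diff: "C2 f S \<Longrightarrow> C2 g S \<Longrightarrow> C2 (\<lambda>x. f x - g x) S"
  using C2_add[OF _ C2_minus, of f S g] by simp

lemma C2_divide: "C2 f S \<Longrightarrow> C2 g S \<Longrightarrow> (\<And>x. x \<in> S \<Longrightarrow> g x \<noteq> 0) \<Longrightarrow> C2 (\<lambda>x. f x / g x) S"
  using C2_mult[OF _ C2_compose[OF C2_inverse], of f S g] by (simp add: divide_inverse)

lemma C2_power: "C2 f S \<Longrightarrow> C2 (\<lambda>x. f x ^ n) S"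
  by (induction n) (auto intro: C2_mult)

lemma C2_cont: assumes "C2 f S" shows "continuous_on S f"
proof -
  from assms obtain g1 g2 :: "real \<Rightarrow> real" where g0: "\<forall>x\<in>S. (f has_real_derivative g1 x) (at x) \<and> (g1 has_real_derivative g2 x) (at x)"
    unfolding C2_def by blast
  show ?thesis
    by (intro continuous_at_imp_continuous_on ballI) (use g0 DERIV_isCont in blast)
qed

lemma taylor2:
  fixes f :: "real \<Rightarrow> real"
  assumes "open S" "{0..1} \<subseteq> S" "C2 f S"
  shows "f 1 = f 0 + deriv f 0 + integral {0..1} (\<lambda>t. deriv (deriv f) t * (1 - t))"
proof -
  from assms(3) obtain g1 g2 :: "real \<Rightarrow> real" where g0: "\<forall>x\<in>S. (f has_real_derivative g1 x) (at x) \<and> (g1 has_real_derivative g2 x) (at x)"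
    unfolding C2_def by blast
  have g: "(f has_real_derivative g1 x) (at x) \<and> (g1 has_real_derivative g2 x) (at x)" if "x \<in> S" for x
    using g0 that by blast
  have d1: "deriv f x = g1 x" if "x \<in> S" for x :: real using g[OF that] DERIV_imp_deriv by blast
  have d2: "deriv (deriv f) x = g2 x" if "x \<in> S" for x :: real
  proof -
    have "(deriv f has_real_derivative g2 x) (at x)"
      using g[OF that] that assms(1) d1
      by (auto intro: has_field_derivative_transform_within_open[where S=S])
    then show ?thesis by (rule DERIV_imp_deriv)
  qed
  define h where "h t = f t + g1 t * (1 - t)" for t
  have "((\<lambda>t. g2 t * (1 - t)) has_integral (h 1 - h 0)) {0..1}"
  proof (rule fundamental_theorem_of_calculus)
    fix x :: real assume x: "x \<in> {0..1}"
    then have xS: "x \<in> S" using assms(2) by auto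
    have "(h has_real_derivative g2 x * (1 - x)) (at x)"
      unfolding h_def using g[OF xS] by (auto intro!: derivative_eq_intros)
    then show "(h has_vector_derivative g2 x * (1 - x)) (at x within {0..1})"
      by (simp add: has_real_derivative_iff_has_vector_derivative has_vector_derivative_at_within)
  qed simp
  then have "integral {0..1} (\<lambda>t. deriv (deriv f) t * (1 - t)) = h 1 - h 0"
    using assms(2) d2 by (subst integral_cong[where g="\<lambda>t. g2 t * (1 - t)"]) (auto simp: integral_unique)
  moreover have "deriv f 0 = g1 0" using assms(2) by (intro d1) auto
  ultimately show ?thesis by (simp add: h_def)
qed




definition Mform :: "real \<Rightarrow> (real \<Rightarrow> real) \<Rightarrow> (real \<Rightarrow> real) \<Rightarrow> (real \<Rightarrow> real) \<Rightarrow> real \<Rightarrow> real" where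
  "Mform m N T E \<theta> = N \<theta> / (2 * pi * T \<theta> / m) powr (3/2) * exp (- E \<theta> / (2 * T \<theta> / m))"

lemma C2_Mform:
  assumes m: "m > 0" and N: "C2 N S" and T: "C2 T S" and E: "C2 E S" and Tp: "\<And>x. x \<in> S \<Longrightarrow> T x > 0"
  shows "C2 (Mform m N T E) S"
proof -
  have Tn: "\<And>x. x \<in> S \<Longrightarrow> T x \<noteq> 0" using Tp by force
  have P: "C2 (\<lambda>x. (2 * pi * T x / m) powr (3/2)) S"
    by (rule C2_compose[OF C2_powr]) (use m Tp in \<open>auto intro!: C2_divide C2_mult T\<close>)
  have X: "C2 (\<lambda>x. exp (- E x / (2 * T x / m))) S"
  proof (rule C2_compose[OF C2_exp[of UNIV]])
    show "C2 (\<lambda>x. - E x / (2 * T x / m)) S"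
      by (intro C2_divide C2_minus C2_mult E T C2_const) (use m in \<open>auto dest!: Tp\<close>)
  qed simp
  show ?thesis unfolding Mform_def
    by (intro C2_mult C2_divide N P X) (use m Tp in \<open>auto simp: Tn\<close>)
qed

lemma deriv_Mform:
  assumes m: "m > 0"
    and N: "(N has_real_derivative N') (at 0)" and T: "(T has_real_derivative T') (at 0)"
    and E: "(E has_real_derivative E') (at 0)"
    and n0: "n0 > 0" and N0: "N 0 = n0" and T0: "T 0 = 1" and E0: "E 0 = w"
  shows "(Mform m N T E has_real_derivative
           Mform m N T E 0 * (N' / n0 - 3/2 * T' - m * E' / 2 + m * w * T' / 2)) (at 0)"
proof -
  have m0: "m \<noteq> 0" using m by simp
  have c: "2 * pi / m > 0" using m by simp
  have "(2 * pi / m) powr (3/2) = (2 * pi / m) powr (1/2 + 1)" by simp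
  also have "\<dots> = (2 * pi / m) powr (1/2) * (2 * pi / m)" using c m by (subst powr_add) simp
  finally have cp: "(2 * pi / m) powr (1/2) * (2 * pi / m) = (2 * pi / m) powr (3/2)" by simp
  define c where "c = 2 * pi / m"
  have Tl: "((\<lambda>x. 2 * pi * T x / m) has_real_derivative 2 * pi * T' / m) (at 0)"
    using T m0 by (auto intro!: derivative_eq_intros)
  have P1: "((\<lambda>x. (2 * pi * T x / m) powr (3/2)) has_real_derivative
      3/2 * (2 * pi * T 0 / m) powr (3/2 - of_nat 1) * (2 * pi * T' / m)) (at 0)"
    by (rule DERIV_fun_powr[OF Tl]) (use c m in \<open>simp add: T0\<close>)
  have "3/2 * (2 * pi * T 0 / m) powr (3/2 - of_nat 1) * (2 * pi * T' / m) = 3/2 * T' * ((2 * pi / m) powr (1/2) * (2 * pi / m))"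
    by (simp add: T0)
  also have "\<dots> = 3/2 * T' * c powr (3/2)" by (simp only: cp c_def)
  finally have eqD: "3/2 * (2 * pi * T 0 / m) powr (3/2 - of_nat 1) * (2 * pi * T' / m) = 3/2 * T' * c powr (3/2)" .
  have P: "((\<lambda>x. (2 * pi * T x / m) powr (3/2)) has_real_derivative 3/2 * T' * c powr (3/2)) (at 0)"
    using P1 unfolding eqD .
  have Q: "((\<lambda>x. - E x / (2 * T x / m)) has_real_derivative (- m * E' / 2 + m * w * T' / 2)) (at 0)"
    using E T m0 by (auto intro!: derivative_eq_intros simp: T0 E0 field_simps power2_eq_square)
  have X: "((\<lambda>x. exp (- E x / (2 * T x / m))) has_real_derivative exp (- w / (2 / m)) * (- m * E' / 2 + m * w * T' / 2)) (at 0)"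
    using DERIV_chain2[OF DERIV_exp Q] by (simp add: T0 E0)
  have P0: "(2 * pi * T 0 / m) powr (3/2) = c powr (3/2)" by (simp add: T0 c_def)
  have cpos: "c powr (3/2) > 0" using c m0 by (simp add: c_def)
  have NP: "((\<lambda>x. N x / (2 * pi * T x / m) powr (3/2)) has_real_derivative
     (N' * c powr (3/2) - n0 * (3/2 * T' * c powr (3/2))) / (c powr (3/2) * c powr (3/2))) (at 0)"
    using DERIV_divide[OF N P] cpos by (simp add: P0 N0)
  have c2: "2 * pi / m = c" and c3: "pi * 2 / m = c" by (simp_all add: c_def)
  have P0c: "2 * pi * T 0 / m = c" by (simp add: T0 c_def)
  have M0: "Mform m N T E 0 = n0 / c powr (3/2) * exp (- w / (2 / m))"
    by (simp add: Mform_def N0 T0 E0 c_def)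
  show ?thesis
    unfolding Mform_def
    apply (rule DERIV_cong[OF DERIV_mult[OF NP X]])
    unfolding P0c N0 E0 T0
    using cpos n0 c2 c3 by (simp add: field_simps)
qed




definition ccf :: "real \<Rightarrow> real \<Rightarrow> real \<Rightarrow> real" where
  "ccf n n0 \<theta> = \<theta> * n / nth \<theta> n n0"

definition Tsc :: "real \<Rightarrow> real \<Rightarrow> real \<Rightarrow> real \<Rightarrow> real \<Rightarrow> real \<Rightarrow> real" where
  "Tsc m n n0 G p \<theta> = (sqrt 6 * \<theta> * G + 3 * nth \<theta> n n0 - m * nth \<theta> n n0 * (ccf n n0 \<theta>)^2 * p) / (3 * nth \<theta> n n0)"

lemma Uth_cc: "Uth \<theta> n n0 U = ccf n n0 \<theta> *\<^sub>R U"
  by (simp add: Uth_def ccf_def)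

lemma Tth_sc: "Tth m \<theta> n n0 U T = Tsc m n n0 (Gk m n U T) ((norm U)^2) \<theta>"
  by (simp add: Tth_def Tsc_def Uth_cc power_mult_distrib)

lemma normexp: "(norm (v - (a *\<^sub>R X + b *\<^sub>R Y)))^2 =
   (norm v)^2 - 2 * a * (v \<bullet> X) - 2 * b * (v \<bullet> Y) + a^2 * (norm X)^2 + 2 * a * b * (X \<bullet> Y) + b^2 * (norm Y)^2"
  unfolding power2_norm_eq_inner by (simp add: inner_diff inner_add algebra_simps inner_commute power2_eq_square)

lemma normexp2: "(norm (b *\<^sub>R Y - a *\<^sub>R X))^2 = b^2 * (norm Y)^2 - 2 * a * b * (X \<bullet> Y) + a^2 * (norm X)^2"
  unfolding power2_norm_eq_inner by (simp add: inner_diff inner_add algebra_simps inner_commute power2_eq_square)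

lemma C2_nth: "C2 (\<lambda>\<theta>. nth \<theta> n n0) S"
  unfolding nth_def by (intro C2_add C2_mult C2_diff C2_const C2_id)

lemma C2_ccf: "C2 (ccf n n0) {\<theta>. nth \<theta> n n0 \<noteq> 0}"
proof -
  have "C2 (\<lambda>\<theta>. \<theta> * n / nth \<theta> n n0) {\<theta>. nth \<theta> n n0 \<noteq> 0}"
    by (intro C2_divide C2_mult C2_const C2_id C2_nth) auto
  then show ?thesis unfolding ccf_def[abs_def] .
qed

lemma C2_Tsc: "C2 (Tsc m n n0 G p) {\<theta>. nth \<theta> n n0 \<noteq> 0}"
proof -
  have "C2 (\<lambda>\<theta>. (sqrt 6 * \<theta> * G + 3 * nth \<theta> n n0 - m * nth \<theta> n n0 * (ccf n n0 \<theta>)^2 * p) / (3 * nth \<theta> n n0)) {\<theta>. nth \<theta> n n0 \<noteq> 0}"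
    by (intro C2_divide C2_mult C2_add C2_diff C2_const C2_id C2_nth C2_power C2_ccf) auto
  then show ?thesis unfolding Tsc_def[abs_def] .
qed

lemma d_nth: "((\<lambda>\<theta>. nth \<theta> n n0) has_real_derivative n - n0) (at x)"
  unfolding nth_def by (auto intro!: derivative_eq_intros)

lemma d_ccf: assumes "n0 \<noteq> 0" shows "(ccf n n0 has_real_derivative n / n0) (at 0)"
proof -
  have "((\<lambda>\<theta>. \<theta> * n / nth \<theta> n n0) has_real_derivative n / n0) (at 0)"
    using assms by (auto intro!: derivative_eq_intros d_nth simp: nth_def field_simps power2_eq_square)
  then show ?thesis unfolding ccf_def[abs_def] .
qed

lemma ccf0[simp]: "ccf n n0 0 = 0" by (simp add: ccf_def)
lemma nth0[simp]: "nth 0 n n0 = n0" by (simp add: nth_def)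
lemma nth1[simp]: "nth 1 n n0 = n" by (simp add: nth_def)

lemma Tsc0: "n0 \<noteq> 0 \<Longrightarrow> Tsc m n n0 G p 0 = 1" by (simp add: Tsc_def)

lemma d_Tsc: assumes n0: "n0 \<noteq> 0" shows "(Tsc m n n0 G p has_real_derivative sqrt 6 * G / (3 * n0)) (at 0)"
proof -
  have "((\<lambda>\<theta>. (sqrt 6 * \<theta> * G + 3 * nth \<theta> n n0 - m * nth \<theta> n n0 * (ccf n n0 \<theta>)^2 * p) / (3 * nth \<theta> n n0))
      has_real_derivative sqrt 6 * G / (3 * n0)) (at 0)"
    using n0 by (auto intro!: derivative_eq_intros d_nth d_ccf simp: field_simps power2_eq_square)
  then show ?thesis unfolding Tsc_def[abs_def] .
qed

lemma d_quad:
  assumes a: "(a has_real_derivative a') (at 0)" and b: "(b has_real_derivative b') (at 0)"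
    and a0: "a 0 = 0" and b0: "b 0 = 0"
  shows "((\<lambda>\<theta>. c0 + c1 * a \<theta> + c2 * b \<theta> + c3 * (a \<theta>)^2 + c4 * a \<theta> * b \<theta> + c5 * (b \<theta>)^2)
     has_real_derivative c1 * a' + c2 * b') (at 0)"
  using a b by (auto intro!: derivative_eq_intros simp: a0 b0)

lemma C2_quad:
  assumes "C2 a S" "C2 b S"
  shows "C2 (\<lambda>\<theta>. c0 + c1 * a \<theta> + c2 * b \<theta> + c3 * (a \<theta>)^2 + c4 * a \<theta> * b \<theta> + c5 * (b \<theta>)^2) S"
  by (intro C2_add C2_mult C2_const C2_power assms)




lemma nth_pos: assumes "n > 0" "n0 > 0" "\<theta> \<in> {0..1}" shows "nth \<theta> n n0 > 0"
proof (cases "\<theta> = 0")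
  case True then show ?thesis using assms by simp
next
  case False
  then have "\<theta> * n > 0" using assms by auto
  moreover have "(1 - \<theta>) * n0 \<ge> 0" using assms by auto
  ultimately show ?thesis by (simp add: nth_def)
qed

lemma Tth1: "n \<noteq> 0 \<Longrightarrow> Tth m 1 n n0 U T = T"
  by (simp add: Tth_def Gk_def Uth_def field_simps)

lemma Uth1: "n \<noteq> 0 \<Longrightarrow> Uth 1 n n0 U = U"
  by (simp add: Uth_def)

lemma Uth0: "Uth 0 n n0 U = 0"
  by (simp add: Uth_def)

lemma Tth0: "n0 \<noteq> 0 \<Longrightarrow> Tth m 0 n n0 U T = 1"
  by (simp add: Tth_def Uth_def)

lemma maxw_mu: assumes "m > 0" shows "maxw m n0 0 1 v = mu m n0 v"
proof -
  have "(m/(2*pi)) powr (3/2) * (2*pi/m) powr (3/2) = 1"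
    using assms by (simp add: powr_mult[symmetric])
  then show ?thesis using assms
    by (simp add: maxw_def mu_def field_simps)
qed

context
  fixes m n n0 \<alpha> \<beta> \<omega>a \<omega>b g m1 m2 n1 n10 n2 n20 T1 T2 :: real and U1 U2 v :: "real^3"
  assumes m: "m > 0" and n: "n > 0" and n0: "n0 > 0" and m1: "m1 > 0" and m2: "m2 > 0"
    and n1: "n1 > 0" and n10: "n10 > 0" and n2: "n2 > 0" and n20: "n20 > 0"
    and \<omega>ab: "\<omega>a + \<omega>b = 1"
    and Tpos: "\<forall>\<theta>\<in>{0..1}. \<omega>a * Tth m1 \<theta> n1 n10 U1 T1 + \<omega>b * Tth m2 \<theta> n2 n20 U2 T2
                    + g * (norm (Uth \<theta> n2 n20 U2 - Uth \<theta> n1 n10 U1))^2 > 0"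
begin

definition "Nf \<theta> = nth \<theta> n n0"
definition "Tf \<theta> = \<omega>a * Tth m1 \<theta> n1 n10 U1 T1 + \<omega>b * Tth m2 \<theta> n2 n20 U2 T2
                    + g * (norm (Uth \<theta> n2 n20 U2 - Uth \<theta> n1 n10 U1))^2"
definition "Ef \<theta> = (norm (v - (\<alpha> *\<^sub>R Uth \<theta> n1 n10 U1 + \<beta> *\<^sub>R Uth \<theta> n2 n20 U2)))^2"

lemma Tf_sc: "Tf = (\<lambda>\<theta>. \<omega>a * Tsc m1 n1 n10 (Gk m1 n1 U1 T1) ((norm U1)^2) \<theta> + \<omega>b * Tsc m2 n2 n20 (Gk m2 n2 U2 T2) ((norm U2)^2) \<theta>
   + (0 + 0 * ccf n1 n10 \<theta> + 0 * ccf n2 n20 \<theta> + g * (norm U1)^2 * (ccf n1 n10 \<theta>)^2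
      + (- 2 * g * (U1 \<bullet> U2)) * ccf n1 n10 \<theta> * ccf n2 n20 \<theta> + g * (norm U2)^2 * (ccf n2 n20 \<theta>)^2))"
  by (rule ext) (simp add: Tf_def Tth_sc Uth_cc normexp2 algebra_simps power_mult_distrib)

lemma Ef_sc: "Ef = (\<lambda>\<theta>. (norm v)^2 + (- 2 * \<alpha> * (v \<bullet> U1)) * ccf n1 n10 \<theta> + (- 2 * \<beta> * (v \<bullet> U2)) * ccf n2 n20 \<theta>
      + \<alpha>^2 * (norm U1)^2 * (ccf n1 n10 \<theta>)^2
      + (2 * \<alpha> * \<beta> * (U1 \<bullet> U2)) * ccf n1 n10 \<theta> * ccf n2 n20 \<theta> + \<beta>^2 * (norm U2)^2 * (ccf n2 n20 \<theta>)^2)"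
  by (rule ext) (simp add: Ef_def Uth_cc normexp algebra_simps power_mult_distrib)

definition "S0 = {\<theta>. 0 < nth \<theta> n1 n10 \<and> 0 < nth \<theta> n2 n20}"
definition "S = S0 \<inter> Tf -` {0<..}"

lemma S0_sub: "S0 \<subseteq> {\<theta>. nth \<theta> n1 n10 \<noteq> 0}" "S0 \<subseteq> {\<theta>. nth \<theta> n2 n20 \<noteq> 0}"
  by (auto simp: S0_def)

lemma C2_Tf: "C2 Tf S0"
  unfolding Tf_sc
  by (intro C2_add C2_mult C2_const C2_quad C2_subset[OF C2_Tsc S0_sub(1)] C2_subset[OF C2_Tsc S0_sub(2)]
        C2_subset[OF C2_ccf S0_sub(1)] C2_subset[OF C2_ccf S0_sub(2)])

lemma C2_Ef: "C2 Ef S0"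
  unfolding Ef_sc
  by (intro C2_quad C2_subset[OF C2_ccf S0_sub(1)] C2_subset[OF C2_ccf S0_sub(2)])

lemma open_S: "open S"
proof -
  have "open S0" unfolding S0_def nth_def
    by (intro open_Collect_conj open_Collect_less continuous_intros)
  then show ?thesis unfolding S_def
    by (intro continuous_open_preimage C2_cont[OF C2_Tf]) auto
qed

lemma sub_S: "{0..1} \<subseteq> S"
  using Tpos nth_pos[OF n1 n10] nth_pos[OF n2 n20] by (auto simp: S_def S0_def Tf_def)

lemma C2_M: "C2 (Mform m Nf Tf Ef) S"
proof (rule C2_Mform[OF m])
  show "C2 Nf S" unfolding Nf_def[abs_def] by (rule C2_nth)
  show "C2 Tf S" by (rule C2_subset[OF C2_Tf]) (auto simp: S_def)
  show "C2 Ef S" by (rule C2_subset[OF C2_Ef]) (auto simp: S_def)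
  show "\<And>x. x \<in> S \<Longrightarrow> 0 < Tf x" by (auto simp: S_def)
qed

definition "TD1 = sqrt 6 * Gk m1 n1 U1 T1 / (3 * n10)"
definition "TD2 = sqrt 6 * Gk m2 n2 U2 T2 / (3 * n20)"

lemma dM: "(Mform m Nf Tf Ef has_real_derivative
   mu m n0 v * ((n - n0) / n0 + m * (\<alpha> * (n1 / n10) * (v \<bullet> U1) + \<beta> * (n2 / n20) * (v \<bullet> U2))
     + (m * (norm v)^2 - 3) / 2 * (\<omega>a * TD1 + \<omega>b * TD2))) (at 0)"
proof -
  have dN: "(Nf has_real_derivative n - n0) (at 0)" unfolding Nf_def[abs_def] by (rule d_nth)
  have n10': "n10 \<noteq> 0" and n20': "n20 \<noteq> 0" using n10 n20 by auto
  have t1: "(Tsc m1 n1 n10 (Gk m1 n1 U1 T1) ((norm U1)^2) has_real_derivative TD1) (at 0)"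
    unfolding TD1_def by (rule d_Tsc[OF n10'])
  have t2: "(Tsc m2 n2 n20 (Gk m2 n2 U2 T2) ((norm U2)^2) has_real_derivative TD2) (at 0)"
    unfolding TD2_def by (rule d_Tsc[OF n20'])
  have q: "((\<lambda>\<theta>. 0 + 0 * ccf n1 n10 \<theta> + 0 * ccf n2 n20 \<theta> + g * (norm U1)^2 * (ccf n1 n10 \<theta>)^2
      + (- 2 * g * (U1 \<bullet> U2)) * ccf n1 n10 \<theta> * ccf n2 n20 \<theta> + g * (norm U2)^2 * (ccf n2 n20 \<theta>)^2)
      has_real_derivative 0 * (n1/n10) + 0 * (n2/n20)) (at 0)"
    by (rule d_quad[OF d_ccf[OF n10'] d_ccf[OF n20']]) simp_all
  have "(Tf has_real_derivative \<omega>a * TD1 + \<omega>b * TD2 + (0 * (n1/n10) + 0 * (n2/n20))) (at 0)"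
    unfolding Tf_sc by (intro DERIV_add DERIV_cmult t1 t2 q)
  then have dT: "(Tf has_real_derivative \<omega>a * TD1 + \<omega>b * TD2) (at 0)" by simp
  have dE: "(Ef has_real_derivative (- 2 * \<alpha> * (v \<bullet> U1)) * (n1/n10) + (- 2 * \<beta> * (v \<bullet> U2)) * (n2/n20)) (at 0)"
    unfolding Ef_sc by (rule d_quad[OF d_ccf[OF n10'] d_ccf[OF n20']]) simp_all
  have N0: "Nf 0 = n0" by (simp add: Nf_def)
  have T0: "Tf 0 = 1" using \<omega>ab n10' n20' by (simp add: Tf_def Tth0 Uth0)
  have E0: "Ef 0 = (norm v)^2" by (simp add: Ef_def Uth0)
  have M0: "Mform m Nf Tf Ef 0 = mu m n0 v"
    using maxw_mu[OF m, of n0 v] by (simp add: Mform_def maxw_def N0 T0 E0)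
  show ?thesis
    apply (rule DERIV_cong[OF deriv_Mform[OF m dN dT dE n0 N0 T0 E0]])
    unfolding M0 using n0 by (simp add: field_simps)
qed

lemma taylor_M: "Mform m Nf Tf Ef 1 = mu m n0 v
   + mu m n0 v * ((n - n0) / n0 + m * (\<alpha> * (n1 / n10) * (v \<bullet> U1) + \<beta> * (n2 / n20) * (v \<bullet> U2))
     + (m * (norm v)^2 - 3) / 2 * (\<omega>a * TD1 + \<omega>b * TD2))
   + integral {0..1} (\<lambda>t. deriv (deriv (Mform m Nf Tf Ef)) t * (1 - t))"
proof -
  have N0: "Nf 0 = n0" by (simp add: Nf_def)
  have T0: "Tf 0 = 1" using \<omega>ab n10 n20 by (simp add: Tf_def Tth0 Uth0)
  have E0: "Ef 0 = (norm v)^2" by (simp add: Ef_def Uth0)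
  have M0: "Mform m Nf Tf Ef 0 = mu m n0 v"
    using maxw_mu[OF m, of n0 v] by (simp add: Mform_def maxw_def N0 T0 E0)
  show ?thesis
    using taylor2[OF open_S sub_S C2_M] DERIV_imp_deriv[OF dM] M0 by simp
qed

lemma taylor_final: "maxw m n (\<alpha> *\<^sub>R U1 + \<beta> *\<^sub>R U2) (\<omega>a * T1 + \<omega>b * T2 + g * (norm (U2 - U1))^2) v
   = mu m n0 v
   + mu m n0 v * ((n - n0) / n0 + m * (\<alpha> * (n1 / n10) * (v \<bullet> U1) + \<beta> * (n2 / n20) * (v \<bullet> U2))
     + (m * (norm v)^2 - 3) / 2 * (\<omega>a * (sqrt 6 * Gk m1 n1 U1 T1 / (3 * n10)) + \<omega>b * (sqrt 6 * Gk m2 n2 U2 T2 / (3 * n20))))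
   + integral {0..1} (\<lambda>t. deriv (deriv (\<lambda>s. maxw m (nth s n n0) (\<alpha> *\<^sub>R Uth s n1 n10 U1 + \<beta> *\<^sub>R Uth s n2 n20 U2)
        (\<omega>a * Tth m1 s n1 n10 U1 T1 + \<omega>b * Tth m2 s n2 n20 U2 T2 + g * (norm (Uth s n2 n20 U2 - Uth s n1 n10 U1))^2) v)) t * (1 - t))"
proof -
  have eq: "Mform m Nf Tf Ef = (\<lambda>s. maxw m (nth s n n0) (\<alpha> *\<^sub>R Uth s n1 n10 U1 + \<beta> *\<^sub>R Uth s n2 n20 U2)
        (\<omega>a * Tth m1 s n1 n10 U1 T1 + \<omega>b * Tth m2 s n2 n20 U2 T2 + g * (norm (Uth s n2 n20 U2 - Uth s n1 n10 U1))^2) v)"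
    by (rule ext) (simp add: Mform_def maxw_def Nf_def Tf_def Ef_def)
  have one: "Mform m Nf Tf Ef 1 = maxw m n (\<alpha> *\<^sub>R U1 + \<beta> *\<^sub>R U2) (\<omega>a * T1 + \<omega>b * T2 + g * (norm (U2 - U1))^2) v"
    using n1 n2 by (simp add: Mform_def maxw_def Nf_def Tf_def Ef_def Tth1 Uth1)
  show ?thesis using taylor_M unfolding eq[symmetric] one TD1_def TD2_def .
qed

end



lemma sum15: "(\<Sum>i::nat=1..5. h i) = h 1 + h 2 + h 3 + h 4 + (h 5 :: real)"
  by (simp add: numeral_eq_Suc atLeastAtMostSuc_conv)

lemma sum24: "(\<Sum>i::nat=2..4. h i) = h 2 + h 3 + (h 4 :: real)"
  by (simp add: numeral_eq_Suc atLeastAtMostSuc_conv)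

lemma inner3: "(v::real^3) \<bullet> U = vcomp 1 v * vcomp 1 U + vcomp 2 v * vcomp 2 U + vcomp 3 v * vcomp 3 U"
  by (simp add: inner_vec_def sum_3 vcomp_def)

lemma sqrt_prod1: assumes "a > 0" "b > 0" "c > 0" "d > 0"
  shows "sqrt (a / b) * sqrt (c / d) * sqrt (d / b) * sqrt (c / a) = c / b"
proof -
  have "sqrt (a / b) * sqrt (c / d) * sqrt (d / b) * sqrt (c / a) = sqrt ((c / b)^2)"
    using assms by (simp add: real_sqrt_mult[symmetric] power2_eq_square field_simps)
  also have "\<dots> = c / b" using assms by simp
  finally show ?thesis .
qed

lemma combine:
  fixes mA nA0 nB0 mB nA nB XA XB c w' :: real and fA fB :: "real^3 \<Rightarrow> real" and UA UB v :: "real^3"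
  assumes mA: "mA > 0" and mB: "mB > 0" and nA0: "nA0 > 0" and nB0: "nB0 > 0"
    and muA: "mu mA nA0 v > 0"
    and hA1: "L2ip fA (ebasis mA nA0 1) = (nA - nA0) / sqrt nA0"
    and hAi: "\<And>i. i \<in> {2,3,4} \<Longrightarrow> L2ip fA (ebasis mA nA0 i) = sqrt (mA / nA0) * nA * vcomp (i - 1) UA"
    and hA5: "L2ip fA (ebasis mA nA0 5) = XA / sqrt (6 * nA0)"
    and hBi: "\<And>i. i \<in> {2,3,4} \<Longrightarrow> L2ip fB (ebasis mB nB0 i) = sqrt (mB / nB0) * nB * vcomp (i - 1) UB"
    and hB5: "L2ip fB (ebasis mB nB0 5) = XB / sqrt (6 * nB0)"
  shows "Pproj mA nA0 fA v * sqrt (mu mA nA0 v)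
     + c * (\<Sum>i=2..4. (sqrt (nA0 / nB0) * sqrt (mA / mB) * L2ip fB (ebasis mB nB0 i) - L2ip fA (ebasis mA nA0 i))
            * ebasis mA nA0 i v * sqrt (mu mA nA0 v))
     + w' * (sqrt (nA0 / nB0) * L2ip fB (ebasis mB nB0 5) - L2ip fA (ebasis mA nA0 5)) * ebasis mA nA0 5 v * sqrt (mu mA nA0 v)
   = mu mA nA0 v * ((nA - nA0) / nA0 + mA * ((1 - c) * (nA / nA0) * (v \<bullet> UA) + c * (nB / nB0) * (v \<bullet> UB))
       + (mA * (norm v)^2 - 3) / 2 * ((1 - w') * XA / (3 * nA0) + w' * XB / (3 * nB0)))"
proof -
  define M where "M = mu mA nA0 v"
  define s where "s = sqrt M"
  have ss: "s * s = M" using muA by (simp add: s_def M_def)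
  have e1: "ebasis mA nA0 1 v = s / sqrt nA0" by (simp add: ebasis_def s_def M_def)
  have ei: "\<And>i. i \<in> {2,3,4} \<Longrightarrow> ebasis mA nA0 i v = sqrt (mA / nA0) * vcomp (i - 1) v * s"
    by (auto simp: ebasis_def s_def M_def)
  have e5: "ebasis mA nA0 5 v = (mA * (norm v)^2 - 3) / sqrt (6 * nA0) * s" by (simp add: ebasis_def s_def M_def)
  have sA: "sqrt (mA / nA0) * sqrt (mA / nA0) = mA / nA0" using mA nA0 by simp
  have sAB: "sqrt (nA0 / nB0) * sqrt (mA / mB) * sqrt (mB / nB0) * sqrt (mA / nA0) = mA / nB0"
    by (rule sqrt_prod1) (use assms in auto)
  have p6A: "sqrt (6 * nA0) > 0" and p6B: "sqrt (6 * nB0) > 0" using nA0 nB0 by auto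
  have s6A: "sqrt (6 * nA0) * sqrt (6 * nA0) = 6 * nA0" using nA0 by simp
  have s6B: "sqrt (nA0 / nB0) / (sqrt (6 * nB0) * sqrt (6 * nA0)) = 1 / (6 * nB0)"
  proof -
    have "sqrt (nA0 / nB0) / (sqrt (6 * nB0) * sqrt (6 * nA0)) = (sqrt nA0 / sqrt nB0) / ((sqrt 6 * sqrt nB0) * (sqrt 6 * sqrt nA0))"
      by (simp only: real_sqrt_divide real_sqrt_mult)
    also have "\<dots> = 1 / ((sqrt 6 * sqrt 6) * (sqrt nB0 * sqrt nB0))"
      using nA0 nB0 by (simp add: field_simps del: real_sqrt_mult_self)
    also have "\<dots> = 1 / (6 * nB0)" using nB0 by simp
    finally show ?thesis .
  qed
  have T1: "L2ip fA (ebasis mA nA0 1) * ebasis mA nA0 1 v * s = M * ((nA - nA0) / nA0)"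
  proof -
    have "L2ip fA (ebasis mA nA0 1) * ebasis mA nA0 1 v * s = (nA - nA0) * (s * s) / (sqrt nA0 * sqrt nA0)"
      unfolding hA1 e1 by (simp add: field_simps del: real_sqrt_mult_self)
    also have "\<dots> = M * ((nA - nA0) / nA0)" unfolding ss using nA0 by simp
    finally show ?thesis .
  qed
  have T2: "(\<Sum>i=2..4. L2ip fA (ebasis mA nA0 i) * ebasis mA nA0 i v) * s = M * (mA * (nA / nA0) * (v \<bullet> UA))"
  proof -
    have "(\<Sum>i=2..4. L2ip fA (ebasis mA nA0 i) * ebasis mA nA0 i v) * s
       = (sqrt (mA / nA0) * sqrt (mA / nA0)) * (s * s) * nA * (vcomp 1 UA * vcomp 1 v + vcomp 2 UA * vcomp 2 v + vcomp 3 UA * vcomp 3 v)"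
      unfolding sum24 by (simp add: hAi ei algebra_simps del: real_sqrt_mult_self)
    also have "\<dots> = M * (mA * (nA / nA0) * (v \<bullet> UA))"
      unfolding sA ss inner3 by (simp add: algebra_simps)
    finally show ?thesis .
  qed
  have T3: "(\<Sum>i=2..4. (sqrt (nA0 / nB0) * sqrt (mA / mB) * L2ip fB (ebasis mB nB0 i) - L2ip fA (ebasis mA nA0 i))
            * ebasis mA nA0 i v * s) = M * (mA * (nB / nB0) * (v \<bullet> UB) - mA * (nA / nA0) * (v \<bullet> UA))"
  proof -
    have "(\<Sum>i=2..4. (sqrt (nA0 / nB0) * sqrt (mA / mB) * L2ip fB (ebasis mB nB0 i) - L2ip fA (ebasis mA nA0 i))
            * ebasis mA nA0 i v * s)
       = (sqrt (nA0 / nB0) * sqrt (mA / mB) * sqrt (mB / nB0) * sqrt (mA / nA0)) * (s * s) * nB * (vcomp 1 UB * vcomp 1 v + vcomp 2 UB * vcomp 2 v + vcomp 3 UB * vcomp 3 v)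
         - (sqrt (mA / nA0) * sqrt (mA / nA0)) * (s * s) * nA * (vcomp 1 UA * vcomp 1 v + vcomp 2 UA * vcomp 2 v + vcomp 3 UA * vcomp 3 v)"
      unfolding sum24 by (simp add: hAi hBi ei algebra_simps del: real_sqrt_mult_self)
    also have "\<dots> = M * (mA * (nB / nB0) * (v \<bullet> UB) - mA * (nA / nA0) * (v \<bullet> UA))"
      unfolding sA sAB ss inner3 by (simp add: algebra_simps)
    finally show ?thesis .
  qed
  have T4: "L2ip fA (ebasis mA nA0 5) * ebasis mA nA0 5 v * s = M * ((mA * (norm v)^2 - 3) / 2 * (XA / (3 * nA0)))"
  proof -
    have "L2ip fA (ebasis mA nA0 5) * ebasis mA nA0 5 v * s = XA * (mA * (norm v)^2 - 3) * (s * s) / (sqrt (6 * nA0) * sqrt (6 * nA0))"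
      unfolding hA5 e5 by (simp add: field_simps)
    also have "\<dots> = M * ((mA * (norm v)^2 - 3) / 2 * (XA / (3 * nA0)))"
      unfolding s6A ss using nA0 by (simp add: field_simps)
    finally show ?thesis .
  qed
  have T5: "(sqrt (nA0 / nB0) * L2ip fB (ebasis mB nB0 5) - L2ip fA (ebasis mA nA0 5)) * ebasis mA nA0 5 v * s
      = M * ((mA * (norm v)^2 - 3) / 2 * (XB / (3 * nB0) - XA / (3 * nA0)))"
  proof -
    have "(sqrt (nA0 / nB0) * L2ip fB (ebasis mB nB0 5) - L2ip fA (ebasis mA nA0 5)) * ebasis mA nA0 5 v * s
       = XB * (mA * (norm v)^2 - 3) * (s * s) * (sqrt (nA0 / nB0) / (sqrt (6 * nB0) * sqrt (6 * nA0)))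
         - XA * (mA * (norm v)^2 - 3) * (s * s) / (sqrt (6 * nA0) * sqrt (6 * nA0))"
      unfolding hA5 hB5 e5 using p6A p6B by (simp add: field_simps del: real_sqrt_mult_self)
    also have "\<dots> = M * ((mA * (norm v)^2 - 3) / 2 * (XB / (3 * nB0) - XA / (3 * nA0)))"
      unfolding s6A s6B ss using nA0 nB0 by (simp add: field_simps)
    finally show ?thesis .
  qed
  have P: "Pproj mA nA0 fA v * s = M * ((nA - nA0) / nA0) + M * (mA * (nA / nA0) * (v \<bullet> UA))
       + M * ((mA * (norm v)^2 - 3) / 2 * (XA / (3 * nA0)))"
  proof -
    have "Pproj mA nA0 fA v * s = L2ip fA (ebasis mA nA0 1) * ebasis mA nA0 1 v * s
       + (\<Sum>i=2..4. L2ip fA (ebasis mA nA0 i) * ebasis mA nA0 i v) * s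
       + L2ip fA (ebasis mA nA0 5) * ebasis mA nA0 5 v * s"
      unfolding Pproj_def sum15 sum24 by (simp add: algebra_simps)
    then show ?thesis using T1 T2 T4 ss by (simp add: algebra_simps)
  qed
  have "Pproj mA nA0 fA v * s
     + c * (\<Sum>i=2..4. (sqrt (nA0 / nB0) * sqrt (mA / mB) * L2ip fB (ebasis mB nB0 i) - L2ip fA (ebasis mA nA0 i))
            * ebasis mA nA0 i v * s)
     + w' * (sqrt (nA0 / nB0) * L2ip fB (ebasis mB nB0 5) - L2ip fA (ebasis mA nA0 5)) * ebasis mA nA0 5 v * s
     = Pproj mA nA0 fA v * s
     + c * (\<Sum>i=2..4. (sqrt (nA0 / nB0) * sqrt (mA / mB) * L2ip fB (ebasis mB nB0 i) - L2ip fA (ebasis mA nA0 i))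
            * ebasis mA nA0 i v * s)
     + w' * ((sqrt (nA0 / nB0) * L2ip fB (ebasis mB nB0 5) - L2ip fA (ebasis mA nA0 5)) * ebasis mA nA0 5 v * s)"
    by (simp only: mult.assoc)
  also have "\<dots> = M * ((nA - nA0) / nA0) + M * (mA * (nA / nA0) * (v \<bullet> UA))
       + M * ((mA * (norm v)^2 - 3) / 2 * (XA / (3 * nA0)))
       + c * (M * (mA * (nB / nB0) * (v \<bullet> UB) - mA * (nA / nA0) * (v \<bullet> UA)))
       + w' * (M * ((mA * (norm v)^2 - 3) / 2 * (XB / (3 * nB0) - XA / (3 * nA0))))"
    unfolding P T3 T5 ..
  also have "\<dots> = M * ((nA - nA0) / nA0 + mA * ((1 - c) * (nA / nA0) * (v \<bullet> UA) + c * (nB / nB0) * (v \<bullet> UB))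
       + (mA * (norm v)^2 - 3) / 2 * ((1 - w') * XA / (3 * nA0) + w' * XB / (3 * nB0)))"
    by (simp add: algebra_simps diff_divide_distrib add_divide_distrib)
  finally show ?thesis unfolding M_def s_def .
qed


lemma triv_imp: "\<And>i::nat. i \<in> {2,3,4} \<Longrightarrow> i \<in> {2,3,4}" by assumption

theorem proposition2p3:
  fixes m1 m2 n10 n20 \<delta> \<omega> \<gamma> :: real
    and f1 f2 F1 F2 :: "real^3 \<Rightarrow> real"
  assumes m: "m1 \<ge> m2" "m2 > 0"
    and n0: "n10 > 0" "n20 > 0"
    and \<delta>: "0 \<le> \<delta>" "\<delta> < 1"
    and \<omega>: "0 \<le> \<omega>" "\<omega> < 1"
    and \<gamma>: "\<gamma> \<ge> 0"
    and F1: "F1 = (\<lambda>v. mu m1 n10 v + sqrt (mu m1 n10 v) * f1 v)"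
    and F2: "F2 = (\<lambda>v. mu m2 n20 v + sqrt (mu m2 n20 v) * f2 v)"
    and int1: "integrable lborel (\<lambda>v. (1 + (norm v)^2) * F1 v)"
    and int2: "integrable lborel (\<lambda>v. (1 + (norm v)^2) * F2 v)"
    and npos: "dens F1 > 0" "dens F2 > 0"
    and Tpos: "\<forall>\<theta>\<in>{0..1}.
        T12th m1 m2 \<omega> \<gamma> (dens F1) n10 (vel F1) (temp m1 F1) (dens F2) n20 (vel F2) (temp m2 F2) \<theta> > 0
      \<and> T21th m1 m2 \<delta> \<omega> \<gamma> (dens F1) n10 (vel F1) (temp m1 F1) (dens F2) n20 (vel F2) (temp m2 F2) \<theta> > 0"
  shows "\<forall>v.
      maxw m1 (dens F1) (U12 \<delta> (vel F1) (vel F2)) (T12 \<omega> \<gamma> (temp m1 F1) (temp m2 F2) (vel F1) (vel F2)) v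
      = mu m1 n10 v + Pproj m1 n10 f1 v * sqrt (mu m1 n10 v)
        + (1 - \<delta>) * (\<Sum>i=2..4. (sqrt (n10 / n20) * sqrt (m1 / m2) * L2ip f2 (ebasis m2 n20 i)
                                   - L2ip f1 (ebasis m1 n10 i)) * ebasis m1 n10 i v * sqrt (mu m1 n10 v))
        + (1 - \<omega>) * (sqrt (n10 / n20) * L2ip f2 (ebasis m2 n20 5) - L2ip f1 (ebasis m1 n10 5))
            * ebasis m1 n10 5 v * sqrt (mu m1 n10 v)
        + sqrt (mu m1 n10 v) * (1 / sqrt (mu m1 n10 v) * integral {0..1} (\<lambda>\<theta>.
            deriv (deriv (\<lambda>s. M12th m1 m2 \<delta> \<omega> \<gamma> (dens F1) n10 (vel F1) (temp m1 F1)
                                       (dens F2) n20 (vel F2) (temp m2 F2) s v)) \<theta> * (1 - \<theta>)))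
    \<and> maxw m2 (dens F2) (U21 m1 m2 \<delta> (vel F1) (vel F2))
          (T21 m1 m2 \<delta> \<omega> \<gamma> (temp m1 F1) (temp m2 F2) (vel F1) (vel F2)) v
      = mu m2 n20 v + Pproj m2 n20 f2 v * sqrt (mu m2 n20 v)
        + m1 / m2 * (1 - \<delta>) * (\<Sum>i=2..4. (sqrt (n20 / n10) * sqrt (m2 / m1) * L2ip f1 (ebasis m1 n10 i)
                                   - L2ip f2 (ebasis m2 n20 i)) * ebasis m2 n20 i v * sqrt (mu m2 n20 v))
        + (1 - \<omega>) * (sqrt (n20 / n10) * L2ip f1 (ebasis m1 n10 5) - L2ip f2 (ebasis m2 n20 5))
            * ebasis m2 n20 5 v * sqrt (mu m2 n20 v)
        + sqrt (mu m2 n20 v) * (1 / sqrt (mu m2 n20 v) * integral {0..1} (\<lambda>\<theta>.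
            deriv (deriv (\<lambda>s. M21th m1 m2 \<delta> \<omega> \<gamma> (dens F1) n10 (vel F1) (temp m1 F1)
                                       (dens F2) n20 (vel F2) (temp m2 F2) s v)) \<theta> * (1 - \<theta>)))"
proof -
  define n1 where "n1 = dens F1"
  define n2 where "n2 = dens F2"
  define U1 where "U1 = vel F1"
  define U2 where "U2 = vel F2"
  define T1 where "T1 = temp m1 F1"
  define T2 where "T2 = temp m2 F2"
  have m1: "m1 > 0" and m2: "m2 > 0" using m by auto
  have n1: "n1 > 0" and n2: "n2 > 0" using npos by (auto simp: n1_def n2_def)
  have d1: "dens F1 \<noteq> 0" and d2: "dens F2 \<noteq> 0" using npos by auto
  note h11 = L2_1[OF m1 n0(1) F1 int1 d1, folded n1_def]
  note h1i = L2_234[OF m1 n0(1) F1 int1 d1, folded n1_def U1_def]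
  note h15 = L2_5[OF m1 n0(1) F1 int1 d1, folded n1_def U1_def T1_def]
  note h21 = L2_1[OF m2 n0(2) F2 int2 d2, folded n2_def]
  note h2i = L2_234[OF m2 n0(2) F2 int2 d2, folded n2_def U2_def]
  note h25 = L2_5[OF m2 n0(2) F2 int2 d2, folded n2_def U2_def T2_def]
  have mu1: "mu m1 n10 v > 0" for v using m1 n0 by (simp add: mu_def)
  have mu2: "mu m2 n20 v > 0" for v using m2 n0 by (simp add: mu_def)
  have TD: "sqrt 6 * Gk m n U T / (3 * n0) = (3 * n * T + m * n * (norm U)^2 - 3 * n) / (3 * n0)" for m n U T and n0 :: real
    by (simp add: Gk_def)
  have Tp12: "\<forall>\<theta>\<in>{0..1}. \<omega> * Tth m1 \<theta> n1 n10 U1 T1 + (1 - \<omega>) * Tth m2 \<theta> n2 n20 U2 T2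
                    + \<gamma> * (norm (Uth \<theta> n2 n20 U2 - Uth \<theta> n1 n10 U1))^2 > 0"
    using Tpos by (simp add: T12th_def T12_def n1_def n2_def U1_def U2_def T1_def T2_def)
  define K where "K = 1/3 * m1 * (1 - \<delta>) * (m1 / m2 * (\<delta> - 1) + 1 + \<delta>) - \<gamma>"
  have Tp21: "\<forall>\<theta>\<in>{0..1}. (1 - \<omega>) * Tth m1 \<theta> n1 n10 U1 T1 + \<omega> * Tth m2 \<theta> n2 n20 U2 T2
                    + K * (norm (Uth \<theta> n2 n20 U2 - Uth \<theta> n1 n10 U1))^2 > 0"
    using Tpos by (simp add: T21th_def T21_def n1_def n2_def U1_def U2_def T1_def T2_def K_def)
  note tay1 = taylor_final[of m1 n1 n10 m1 m2 n1 n10 n2 n20 \<omega> "1-\<omega>" U1 T1 U2 T2 \<gamma> \<delta> "1-\<delta>",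
      OF m1 n1 n0(1) m1 m2 n1 n0(1) n2 n0(2) _ Tp12]
  note tay2 = taylor_final[of m2 n2 n20 m1 m2 n1 n10 n2 n20 "1-\<omega>" \<omega> U1 T1 U2 T2 K "m1 / m2 * (1 - \<delta>)" "1 - m1 / m2 * (1 - \<delta>)",
      OF m2 n2 n0(2) m1 m2 n1 n0(1) n2 n0(2) _ Tp21]
  note comb1 = combine[where c="1-\<delta>" and w'="1-\<omega>", OF m1 m2 n0(1) n0(2) mu1 h11 h1i h15 h2i h25, OF triv_imp triv_imp]
  note comb2 = combine[where c="m1 / m2 * (1 - \<delta>)" and w'="1-\<omega>", OF m2 m1 n0(2) n0(1) mu2 h21 h2i h25 h1i h15, OF triv_imp triv_imp]
  show ?thesis
  proof (intro allI conjI)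
    fix v :: "real^3"
    define s where "s = sqrt (mu m1 n10 v)"
    have sp: "s > 0" using mu1[of v] by (simp add: s_def)
    define I where "I = integral {0..1} (\<lambda>\<theta>.
            deriv (deriv (\<lambda>s. M12th m1 m2 \<delta> \<omega> \<gamma> (dens F1) n10 (vel F1) (temp m1 F1)
                                       (dens F2) n20 (vel F2) (temp m2 F2) s v)) \<theta> * (1 - \<theta>))"
    have sI: "s * (1 / s * I) = I" using sp by simp
    have Meq: "(\<lambda>s. M12th m1 m2 \<delta> \<omega> \<gamma> (dens F1) n10 (vel F1) (temp m1 F1) (dens F2) n20 (vel F2) (temp m2 F2) s v)
      = (\<lambda>s. maxw m1 (nth s n1 n10) (\<delta> *\<^sub>R Uth s n1 n10 U1 + (1 - \<delta>) *\<^sub>R Uth s n2 n20 U2)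
        (\<omega> * Tth m1 s n1 n10 U1 T1 + (1 - \<omega>) * Tth m2 s n2 n20 U2 T2 + \<gamma> * (norm (Uth s n2 n20 U2 - Uth s n1 n10 U1))^2) v)"
      by (rule ext) (simp only: M12th_def T12th_def T12_def U12_def n1_def n2_def U1_def U2_def T1_def T2_def)
    have L: "maxw m1 (dens F1) (U12 \<delta> (vel F1) (vel F2)) (T12 \<omega> \<gamma> (temp m1 F1) (temp m2 F2) (vel F1) (vel F2)) v
       = maxw m1 n1 (\<delta> *\<^sub>R U1 + (1 - \<delta>) *\<^sub>R U2) (\<omega> * T1 + (1 - \<omega>) * T2 + \<gamma> * (norm (U2 - U1))^2) v"
      by (simp only: T12_def U12_def n1_def n2_def U1_def U2_def T1_def T2_def)
    have "maxw m1 (dens F1) (U12 \<delta> (vel F1) (vel F2)) (T12 \<omega> \<gamma> (temp m1 F1) (temp m2 F2) (vel F1) (vel F2)) v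
       = mu m1 n10 v + mu m1 n10 v * ((n1 - n10) / n10 + m1 * (\<delta> * (n1 / n10) * (v \<bullet> U1) + (1 - \<delta>) * (n2 / n20) * (v \<bullet> U2))
     + (m1 * (norm v)^2 - 3) / 2 * (\<omega> * (sqrt 6 * Gk m1 n1 U1 T1 / (3 * n10)) + (1 - \<omega>) * (sqrt 6 * Gk m2 n2 U2 T2 / (3 * n20)))) + I"
      unfolding L I_def Meq by (rule tay1) simp
    also have "mu m1 n10 v * ((n1 - n10) / n10 + m1 * (\<delta> * (n1 / n10) * (v \<bullet> U1) + (1 - \<delta>) * (n2 / n20) * (v \<bullet> U2))
     + (m1 * (norm v)^2 - 3) / 2 * (\<omega> * (sqrt 6 * Gk m1 n1 U1 T1 / (3 * n10)) + (1 - \<omega>) * (sqrt 6 * Gk m2 n2 U2 T2 / (3 * n20))))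
      = mu m1 n10 v * ((n1 - n10) / n10 + m1 * ((1 - (1 - \<delta>)) * (n1 / n10) * (v \<bullet> U1) + (1 - \<delta>) * (n2 / n20) * (v \<bullet> U2))
       + (m1 * (norm v)^2 - 3) / 2 * ((1 - (1 - \<omega>)) * (3 * n1 * T1 + m1 * n1 * (norm U1)^2 - 3 * n1) / (3 * n10)
          + (1 - \<omega>) * (3 * n2 * T2 + m2 * n2 * (norm U2)^2 - 3 * n2) / (3 * n20)))"
      unfolding TD by simp
    also have "\<dots> = Pproj m1 n10 f1 v * s
        + (1 - \<delta>) * (\<Sum>i=2..4. (sqrt (n10 / n20) * sqrt (m1 / m2) * L2ip f2 (ebasis m2 n20 i)
                                   - L2ip f1 (ebasis m1 n10 i)) * ebasis m1 n10 i v * s)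
        + (1 - \<omega>) * (sqrt (n10 / n20) * L2ip f2 (ebasis m2 n20 5) - L2ip f1 (ebasis m1 n10 5))
            * ebasis m1 n10 5 v * s"
      unfolding s_def by (rule comb1[symmetric])
    finally show "maxw m1 (dens F1) (U12 \<delta> (vel F1) (vel F2)) (T12 \<omega> \<gamma> (temp m1 F1) (temp m2 F2) (vel F1) (vel F2)) v
      = mu m1 n10 v + Pproj m1 n10 f1 v * sqrt (mu m1 n10 v)
        + (1 - \<delta>) * (\<Sum>i=2..4. (sqrt (n10 / n20) * sqrt (m1 / m2) * L2ip f2 (ebasis m2 n20 i)
                                   - L2ip f1 (ebasis m1 n10 i)) * ebasis m1 n10 i v * sqrt (mu m1 n10 v))
        + (1 - \<omega>) * (sqrt (n10 / n20) * L2ip f2 (ebasis m2 n20 5) - L2ip f1 (ebasis m1 n10 5))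
            * ebasis m1 n10 5 v * sqrt (mu m1 n10 v)
        + sqrt (mu m1 n10 v) * (1 / sqrt (mu m1 n10 v) * integral {0..1} (\<lambda>\<theta>.
            deriv (deriv (\<lambda>s. M12th m1 m2 \<delta> \<omega> \<gamma> (dens F1) n10 (vel F1) (temp m1 F1)
                                       (dens F2) n20 (vel F2) (temp m2 F2) s v)) \<theta> * (1 - \<theta>)))"
      unfolding s_def[symmetric] I_def[symmetric] sI by (simp only: add.assoc)
  next
    fix v :: "real^3"
    define s where "s = sqrt (mu m2 n20 v)"
    have sp: "s > 0" using mu2[of v] by (simp add: s_def)
    define I where "I = integral {0..1} (\<lambda>\<theta>.
            deriv (deriv (\<lambda>s. M21th m1 m2 \<delta> \<omega> \<gamma> (dens F1) n10 (vel F1) (temp m1 F1)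
                                       (dens F2) n20 (vel F2) (temp m2 F2) s v)) \<theta> * (1 - \<theta>))"
    have sI: "s * (1 / s * I) = I" using sp by simp
    have Meq: "(\<lambda>s. M21th m1 m2 \<delta> \<omega> \<gamma> (dens F1) n10 (vel F1) (temp m1 F1) (dens F2) n20 (vel F2) (temp m2 F2) s v)
      = (\<lambda>s. maxw m2 (nth s n2 n20) ((m1 / m2 * (1 - \<delta>)) *\<^sub>R Uth s n1 n10 U1 + (1 - m1 / m2 * (1 - \<delta>)) *\<^sub>R Uth s n2 n20 U2)
        ((1 - \<omega>) * Tth m1 s n1 n10 U1 T1 + \<omega> * Tth m2 s n2 n20 U2 T2 + K * (norm (Uth s n2 n20 U2 - Uth s n1 n10 U1))^2) v)"
      by (rule ext) (simp only: M21th_def T21th_def T21_def U21_def n1_def n2_def U1_def U2_def T1_def T2_def K_def)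
    have L: "maxw m2 (dens F2) (U21 m1 m2 \<delta> (vel F1) (vel F2))
          (T21 m1 m2 \<delta> \<omega> \<gamma> (temp m1 F1) (temp m2 F2) (vel F1) (vel F2)) v
       = maxw m2 n2 ((m1 / m2 * (1 - \<delta>)) *\<^sub>R U1 + (1 - m1 / m2 * (1 - \<delta>)) *\<^sub>R U2) ((1 - \<omega>) * T1 + \<omega> * T2 + K * (norm (U2 - U1))^2) v"
      by (simp only: T21_def U21_def n1_def n2_def U1_def U2_def T1_def T2_def K_def)
    have "maxw m2 (dens F2) (U21 m1 m2 \<delta> (vel F1) (vel F2))
          (T21 m1 m2 \<delta> \<omega> \<gamma> (temp m1 F1) (temp m2 F2) (vel F1) (vel F2)) v
       = mu m2 n20 v + mu m2 n20 v * ((n2 - n20) / n20 + m2 * ((m1 / m2 * (1 - \<delta>)) * (n1 / n10) * (v \<bullet> U1) + (1 - m1 / m2 * (1 - \<delta>)) * (n2 / n20) * (v \<bullet> U2))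
     + (m2 * (norm v)^2 - 3) / 2 * ((1 - \<omega>) * (sqrt 6 * Gk m1 n1 U1 T1 / (3 * n10)) + \<omega> * (sqrt 6 * Gk m2 n2 U2 T2 / (3 * n20)))) + I"
      unfolding L I_def Meq by (rule tay2) simp
    also have "mu m2 n20 v * ((n2 - n20) / n20 + m2 * ((m1 / m2 * (1 - \<delta>)) * (n1 / n10) * (v \<bullet> U1) + (1 - m1 / m2 * (1 - \<delta>)) * (n2 / n20) * (v \<bullet> U2))
     + (m2 * (norm v)^2 - 3) / 2 * ((1 - \<omega>) * (sqrt 6 * Gk m1 n1 U1 T1 / (3 * n10)) + \<omega> * (sqrt 6 * Gk m2 n2 U2 T2 / (3 * n20))))
      = mu m2 n20 v * ((n2 - n20) / n20 + m2 * ((1 - m1 / m2 * (1 - \<delta>)) * (n2 / n20) * (v \<bullet> U2) + m1 / m2 * (1 - \<delta>) * (n1 / n10) * (v \<bullet> U1))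
       + (m2 * (norm v)^2 - 3) / 2 * ((1 - (1 - \<omega>)) * (3 * n2 * T2 + m2 * n2 * (norm U2)^2 - 3 * n2) / (3 * n20)
          + (1 - \<omega>) * (3 * n1 * T1 + m1 * n1 * (norm U1)^2 - 3 * n1) / (3 * n10)))"
      unfolding TD by (simp add: algebra_simps)
    also have "\<dots> = Pproj m2 n20 f2 v * s
        + m1 / m2 * (1 - \<delta>) * (\<Sum>i=2..4. (sqrt (n20 / n10) * sqrt (m2 / m1) * L2ip f1 (ebasis m1 n10 i)
                                   - L2ip f2 (ebasis m2 n20 i)) * ebasis m2 n20 i v * s)
        + (1 - \<omega>) * (sqrt (n20 / n10) * L2ip f1 (ebasis m1 n10 5) - L2ip f2 (ebasis m2 n20 5))
            * ebasis m2 n20 5 v * s"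
      unfolding s_def by (rule comb2[symmetric])
    finally show "maxw m2 (dens F2) (U21 m1 m2 \<delta> (vel F1) (vel F2))
          (T21 m1 m2 \<delta> \<omega> \<gamma> (temp m1 F1) (temp m2 F2) (vel F1) (vel F2)) v
      = mu m2 n20 v + Pproj m2 n20 f2 v * sqrt (mu m2 n20 v)
        + m1 / m2 * (1 - \<delta>) * (\<Sum>i=2..4. (sqrt (n20 / n10) * sqrt (m2 / m1) * L2ip f1 (ebasis m1 n10 i)
                                   - L2ip f2 (ebasis m2 n20 i)) * ebasis m2 n20 i v * sqrt (mu m2 n20 v))
        + (1 - \<omega>) * (sqrt (n20 / n10) * L2ip f1 (ebasis m1 n10 5) - L2ip f2 (ebasis m2 n20 5))
            * ebasis m2 n20 5 v * sqrt (mu m2 n20 v)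
        + sqrt (mu m2 n20 v) * (1 / sqrt (mu m2 n20 v) * integral {0..1} (\<lambda>\<theta>.
            deriv (deriv (\<lambda>s. M21th m1 m2 \<delta> \<omega> \<gamma> (dens F1) n10 (vel F1) (temp m1 F1)
                                       (dens F2) n20 (vel F2) (temp m2 F2) s v)) \<theta> * (1 - \<theta>)))"
      unfolding s_def[symmetric] I_def[symmetric] sI by (simp only: add.assoc)
  qed
qed


end
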